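(* Let $I_1,I_2,I_3\ge2$ and $R\ge1$. If the real $R$-term CPD of $I_1\times I_2\times I_3$ tensors is generically unique, then the $R$-term additive polynomial model $(\mu_R,\Theta_1^R)$ with $\Theta_1=\mathbb{R}^{I_1+I_2+I_3-2}$ and base map $$\mu_1(\lambda,\underline{\mathbf{a}},\underline{\mathbf{b}},\underline{\mathbf{c}})=\mathrm{vec}\Big(\lambda\begin{bmatrix}\underline{\mathbf{a}}\\1\end{bmatrix}\circ\begin{bmatrix}\underline{\mathbf{b}}\\1\end{bmatrix}\circ\begin{bmatrix}\underline{\mathbf{c}}\\1\end{bmatrix}\Big),\qquad \lambda\in\mathbb{R},\ \underline{\mathbf{a}}\in\mathbb{R}^{I_1-1},\ \underline{\mathbf{b}}\in\mathbb{R}^{I_2-1},\ \underline{\mathbf{c}}\in\mathbb{R}^{I_3-1},$$ is identifiable.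
   Context: Generic uniqueness of the real $R$-term CPD: for all $(\boldsymbol\lambda,\mathbf{A},\mathbf{B},\mathbf{C})\in\mathbb{R}^R\times\mathbb{R}^{I_1\times R}\times\mathbb{R}^{I_2\times R}\times\mathbb{R}^{I_3\times R}$ outside a Lebesgue-null set, every other $R$-term decomposition of $\sum_r\lambda_r\mathbf{a}_r\circ\mathbf{b}_r\circ\mathbf{c}_r$ is obtained by permutation of terms and rescaling of the factors within each term. Additive model: given a base polynomial map $\mu_1:\Theta_1\to\mathbb{R}^S$, the $R$-term model is $\mu_R(\theta_1,\dots,\theta_R)=\mu_1(\theta_1)+\cdots+\mu_1(\theta_R)$ on $\Theta_1^R$. It is identifiable if for all $\theta\in\Theta_1^R$ outside a Lebesgue-null set, every $\theta'\in\Theta_1^R$ with $\mu_R(\theta')=\mu_R(\theta)$ is obtained from $\theta$ by permuting the blocks $\theta_r$ and replacing blocks by $\theta'_r$ with $\mu_1(\theta'_r)=\mu_1(\theta_r)$. *)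

theory Defs
  imports "HOL-Analysis.Analysis"
begin

text \<open>Coordinates of a CPD parameter (lambda, A, B, C):
  Lam r = lambda_r, FA i r = A(i,r), FB j r = B(j,r), FC k r = C(k,r).\<close>
datatype cpd_idx = Lam nat | FA nat nat | FB nat nat | FC nat nat

definition cpd_index :: "nat \<Rightarrow> nat \<Rightarrow> nat \<Rightarrow> nat \<Rightarrow> cpd_idx set" where
  "cpd_index I1 I2 I3 R =
     Lam ` {..<R}
   \<union> (\<lambda>(i, r). FA i r) ` ({..<I1} \<times> {..<R})
   \<union> (\<lambda>(j, r). FB j r) ` ({..<I2} \<times> {..<R})
   \<union> (\<lambda>(k, r). FC k r) ` ({..<I3} \<times> {..<R})"

definition cpd_measure :: "nat \<Rightarrow> nat \<Rightarrow> nat \<Rightarrow> nat \<Rightarrow> (cpd_idx \<Rightarrow> real) measure" where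
  "cpd_measure I1 I2 I3 R = PiM (cpd_index I1 I2 I3 R) (\<lambda>_. lborel)"

definition cpd_tensor :: "nat \<Rightarrow> (cpd_idx \<Rightarrow> real) \<Rightarrow> nat \<Rightarrow> nat \<Rightarrow> nat \<Rightarrow> real" where
  "cpd_tensor R p i j k = (\<Sum>r<R. p (Lam r) * p (FA i r) * p (FB j r) * p (FC k r))"

definition cpd_perm_scale :: "nat \<Rightarrow> nat \<Rightarrow> nat \<Rightarrow> nat \<Rightarrow> (cpd_idx \<Rightarrow> real) \<Rightarrow> (cpd_idx \<Rightarrow> real) \<Rightarrow> bool" where
  "cpd_perm_scale I1 I2 I3 R p p' \<longleftrightarrow>
     (\<exists>\<sigma>. \<sigma> permutes {..<R} \<and>
        (\<forall>r<R. \<exists>\<delta> \<alpha> \<beta> \<gamma> :: real. \<delta> * \<alpha> * \<beta> * \<gamma> = 1 \<and>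
            p' (Lam (\<sigma> r)) = \<delta> * p (Lam r) \<and>
            (\<forall>i<I1. p' (FA i (\<sigma> r)) = \<alpha> * p (FA i r)) \<and>
            (\<forall>j<I2. p' (FB j (\<sigma> r)) = \<beta> * p (FB j r)) \<and>
            (\<forall>k<I3. p' (FC k (\<sigma> r)) = \<gamma> * p (FC k r))))"

definition cpd_generically_unique :: "nat \<Rightarrow> nat \<Rightarrow> nat \<Rightarrow> nat \<Rightarrow> bool" where
  "cpd_generically_unique I1 I2 I3 R \<longleftrightarrow>
     (AE p in cpd_measure I1 I2 I3 R.
        \<forall>p' \<in> space (cpd_measure I1 I2 I3 R).
          (\<forall>i<I1. \<forall>j<I2. \<forall>k<I3. cpd_tensor R p' i j k = cpd_tensor R p i j k)
          \<longrightarrow> cpd_perm_scale I1 I2 I3 R p p')"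

text \<open>Base map mu1 : R^d -> R^S (vectors represented as functions on {..<d}, {..<S});
  the R-term parameter theta in (R^d)^R is a function on {..<R} x {..<d},
  block r being (\<lambda>k. theta (r,k)).\<close>
definition additive_identifiable :: "nat \<Rightarrow> nat \<Rightarrow> nat \<Rightarrow> ((nat \<Rightarrow> real) \<Rightarrow> (nat \<Rightarrow> real)) \<Rightarrow> bool" where
  "additive_identifiable d S R mu1 \<longleftrightarrow>
     (AE \<theta> in PiM ({..<R} \<times> {..<d}) (\<lambda>_. lborel).
        \<forall>\<theta>' \<in> space (PiM ({..<R} \<times> {..<d}) (\<lambda>_. lborel)).
          (\<forall>s<S. (\<Sum>r<R. mu1 (\<lambda>k. \<theta>' (r, k)) s) = (\<Sum>r<R. mu1 (\<lambda>k. \<theta> (r, k)) s))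
          \<longrightarrow> (\<exists>\<sigma>. \<sigma> permutes {..<R} \<and>
                (\<forall>r<R. \<forall>s<S. mu1 (\<lambda>k. \<theta>' (\<sigma> r, k)) s = mu1 (\<lambda>k. \<theta> (r, k)) s)))"

definition ext1 :: "nat \<Rightarrow> (nat \<Rightarrow> real) \<Rightarrow> nat \<Rightarrow> real" where
  "ext1 n v i = (if i < n - 1 then v i else 1)"

text \<open>theta1 in R^(I1+I2+I3-2) laid out as
  (lambda, a_0..a_(I1-2), b_0..b_(I2-2), c_0..c_(I3-2));
  output vec(T) with vec index s = i + I1*j + I1*I2*k (column-major).\<close>
definition cpd_base_map :: "nat \<Rightarrow> nat \<Rightarrow> nat \<Rightarrow> (nat \<Rightarrow> real) \<Rightarrow> nat \<Rightarrow> real" where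
  "cpd_base_map I1 I2 I3 t s =
     (let i = s mod I1; j = (s div I1) mod I2; k = s div (I1 * I2);
          lam = t 0;
          a = (\<lambda>q. t (1 + q));
          b = (\<lambda>q. t (I1 + q));
          c = (\<lambda>q. t (I1 + I2 - 1 + q))
      in lam * ext1 I1 a i * ext1 I2 b j * ext1 I3 c k)"

end

theory Submission
  imports Defs "HOL-Analysis.Analysis"
begin
lemma enc_bounds:
  fixes I1 I2 I3 i j k :: nat
  assumes "i < I1" "j < I2" "k < I3"
  shows "i + I1 * j + I1 * I2 * k < I1 * I2 * I3"
proof -
  have "i + I1 * j < I1 * (j + 1)" using assms by simp
  also have "\<dots> \<le> I1 * I2" using assms by (intro mult_left_mono) auto
  finally have a: "i + I1 * j < I1 * I2" .
  have "i + I1 * j + I1 * I2 * k < I1 * I2 * (k + 1)" using a by simp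
  also have "\<dots> \<le> I1 * I2 * I3" using assms by (intro mult_left_mono) auto
  finally show ?thesis .
qed

lemma enc_decode:
  fixes I1 I2 i j k :: nat
  assumes "i < I1" "j < I2"
  shows "(i + I1 * j + I1 * I2 * k) mod I1 = i"
    and "((i + I1 * j + I1 * I2 * k) div I1) mod I2 = j"
    and "(i + I1 * j + I1 * I2 * k) div (I1 * I2) = k"
proof -
  have I1: "I1 > 0" using assms by simp
  have I2: "I2 > 0" using assms by simp
  have e: "i + I1 * j + I1 * I2 * k = i + I1 * (j + I2 * k)" by (simp add: algebra_simps)
  show "(i + I1 * j + I1 * I2 * k) mod I1 = i" unfolding e using assms by simp
  have d: "(i + I1 * j + I1 * I2 * k) div I1 = j + I2 * k" unfolding e using assms by simp
  show "((i + I1 * j + I1 * I2 * k) div I1) mod I2 = j" unfolding d using assms by simp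
  show "(i + I1 * j + I1 * I2 * k) div (I1 * I2) = k"
    using d assms by (simp add: div_mult2_eq)
qed

lemma dec_enc:
  fixes I1 I2 I3 s :: nat
  assumes "0 < I1" "0 < I2" "s < I1 * I2 * I3"
  shows "s = s mod I1 + I1 * ((s div I1) mod I2) + I1 * I2 * (s div (I1 * I2))"
    and "s mod I1 < I1" "(s div I1) mod I2 < I2" "s div (I1 * I2) < I3"
proof -
  have "s = s mod I1 + I1 * (s div I1)" by simp
  also have "s div I1 = (s div I1) mod I2 + I2 * ((s div I1) div I2)" by simp
  also have "(s div I1) div I2 = s div (I1 * I2)" by (simp add: div_mult2_eq)
  finally show "s = s mod I1 + I1 * ((s div I1) mod I2) + I1 * I2 * (s div (I1 * I2))"
    by (simp add: algebra_simps)
  show "s mod I1 < I1" "(s div I1) mod I2 < I2" using assms by auto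
  show "s div (I1 * I2) < I3" using assms by (simp add: div_less_iff_less_mult mult.commute mult.left_commute)
qed

lemma base_map_enc:
  assumes "i < I1" "j < I2" "k < I3"
  shows "cpd_base_map I1 I2 I3 t (i + I1 * j + I1 * I2 * k) =
    t 0 * ext1 I1 (\<lambda>q. t (1 + q)) i * ext1 I2 (\<lambda>q. t (I1 + q)) j * ext1 I3 (\<lambda>q. t (I1 + I2 - 1 + q)) k"
  using enc_decode[OF assms(1,2), of k] by (simp add: cpd_base_map_def Let_def)


definition ScI :: "nat \<Rightarrow> nat \<Rightarrow> nat \<Rightarrow> nat \<Rightarrow> cpd_idx set" where
  "ScI I1 I2 I3 R = {\<tau>. case \<tau> of Lam r \<Rightarrow> False | FA i r \<Rightarrow> i = I1 - 1 \<and> r < R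
     | FB j r \<Rightarrow> j = I2 - 1 \<and> r < R | FC k r \<Rightarrow> k = I3 - 1 \<and> r < R}"

definition TcI :: "nat \<Rightarrow> nat \<Rightarrow> nat \<Rightarrow> nat \<Rightarrow> cpd_idx set" where
  "TcI I1 I2 I3 R = {\<tau>. case \<tau> of Lam r \<Rightarrow> r < R | FA i r \<Rightarrow> i < I1 - 1 \<and> r < R
     | FB j r \<Rightarrow> j < I2 - 1 \<and> r < R | FC k r \<Rightarrow> k < I3 - 1 \<and> r < R}"

definition eidx :: "nat \<Rightarrow> nat \<Rightarrow> cpd_idx \<Rightarrow> nat \<times> nat" where
  "eidx I1 I2 \<tau> = (case \<tau> of Lam r \<Rightarrow> (r, 0) | FA i r \<Rightarrow> (r, 1 + i)
     | FB j r \<Rightarrow> (r, I1 + j) | FC k r \<Rightarrow> (r, I1 + I2 - 1 + k))"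

definition ccs :: "nat \<Rightarrow> nat \<Rightarrow> nat \<Rightarrow> (cpd_idx \<Rightarrow> real) \<Rightarrow> cpd_idx \<Rightarrow> real" where
  "ccs I1 I2 I3 y \<tau> = (case \<tau> of
       Lam r \<Rightarrow> inverse (y (FA (I1 - 1) r) * y (FB (I2 - 1) r) * y (FC (I3 - 1) r))
     | FA i r \<Rightarrow> y (FA (I1 - 1) r) | FB j r \<Rightarrow> y (FB (I2 - 1) r) | FC k r \<Rightarrow> y (FC (I3 - 1) r))"

definition PhiP :: "nat \<Rightarrow> nat \<Rightarrow> nat \<Rightarrow> nat \<Rightarrow> (nat \<times> nat \<Rightarrow> real) \<Rightarrow> cpd_idx \<Rightarrow> real" where
  "PhiP I1 I2 I3 R \<theta> = (\<lambda>\<tau>\<in>cpd_index I1 I2 I3 R. case \<tau> of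
       Lam r \<Rightarrow> \<theta> (r, 0)
     | FA i r \<Rightarrow> ext1 I1 (\<lambda>q. \<theta> (r, 1 + q)) i
     | FB j r \<Rightarrow> ext1 I2 (\<lambda>q. \<theta> (r, I1 + q)) j
     | FC k r \<Rightarrow> ext1 I3 (\<lambda>q. \<theta> (r, I1 + I2 - 1 + q)) k)"

lemma mem_cpd_index[simp]:
  "Lam r \<in> cpd_index I1 I2 I3 R \<longleftrightarrow> r < R"
  "FA i r \<in> cpd_index I1 I2 I3 R \<longleftrightarrow> i < I1 \<and> r < R"
  "FB j r \<in> cpd_index I1 I2 I3 R \<longleftrightarrow> j < I2 \<and> r < R"
  "FC k r \<in> cpd_index I1 I2 I3 R \<longleftrightarrow> k < I3 \<and> r < R"
  by (auto simp: cpd_index_def)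

lemma finite_cpd_index: "finite (cpd_index I1 I2 I3 R)"
  by (simp add: cpd_index_def)

lemma ScI_TcI_union:
  assumes "I1 \<ge> 1" "I2 \<ge> 1" "I3 \<ge> 1"
  shows "ScI I1 I2 I3 R \<union> TcI I1 I2 I3 R = cpd_index I1 I2 I3 R"
proof (intro set_eqI)
  fix \<tau> show "\<tau> \<in> ScI I1 I2 I3 R \<union> TcI I1 I2 I3 R \<longleftrightarrow> \<tau> \<in> cpd_index I1 I2 I3 R"
    using assms by (cases \<tau>) (auto simp: ScI_def TcI_def)
qed

lemma ScI_TcI_disj: "ScI I1 I2 I3 R \<inter> TcI I1 I2 I3 R = {}"
proof (intro set_eqI iffI)
  fix x assume "x \<in> ScI I1 I2 I3 R \<inter> TcI I1 I2 I3 R"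
  then show "x \<in> {}" by (cases x) (auto simp: ScI_def TcI_def)
qed simp

lemma finite_ScI: "I1 \<ge> 1 \<Longrightarrow> I2 \<ge> 1 \<Longrightarrow> I3 \<ge> 1 \<Longrightarrow> finite (ScI I1 I2 I3 R)"
  using ScI_TcI_union[of I1 I2 I3 R] finite_cpd_index[of I1 I2 I3 R] by (metis finite_Un)

lemma finite_TcI: "I1 \<ge> 1 \<Longrightarrow> I2 \<ge> 1 \<Longrightarrow> I3 \<ge> 1 \<Longrightarrow> finite (TcI I1 I2 I3 R)"
  using ScI_TcI_union[of I1 I2 I3 R] finite_cpd_index[of I1 I2 I3 R] by (metis finite_Un)

lemma bij_eidx:
  assumes "I1 \<ge> 2" "I2 \<ge> 2" "I3 \<ge> 2"
  shows "bij_betw (eidx I1 I2) (TcI I1 I2 I3 R) ({..<R} \<times> {..<I1 + I2 + I3 - 2})"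
  unfolding bij_betw_def
proof
  show "inj_on (eidx I1 I2) (TcI I1 I2 I3 R)"
  proof (rule inj_onI)
    fix x y assume "x \<in> TcI I1 I2 I3 R" "y \<in> TcI I1 I2 I3 R" "eidx I1 I2 x = eidx I1 I2 y"
    then show "x = y" using assms
      by (cases x; cases y) (auto simp: TcI_def eidx_def)
  qed
  show "eidx I1 I2 ` TcI I1 I2 I3 R = {..<R} \<times> {..<I1 + I2 + I3 - 2}"
  proof
    show "eidx I1 I2 ` TcI I1 I2 I3 R \<subseteq> {..<R} \<times> {..<I1 + I2 + I3 - 2}"
    proof
      fix z assume "z \<in> eidx I1 I2 ` TcI I1 I2 I3 R"
      then obtain x where x: "x \<in> TcI I1 I2 I3 R" "z = eidx I1 I2 x" by blast
      then show "z \<in> {..<R} \<times> {..<I1 + I2 + I3 - 2}" using assms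
        by (cases x) (auto simp: TcI_def eidx_def)
    qed
    show "{..<R} \<times> {..<I1 + I2 + I3 - 2} \<subseteq> eidx I1 I2 ` TcI I1 I2 I3 R"
    proof
      fix z assume z: "z \<in> {..<R} \<times> {..<I1 + I2 + I3 - 2}"
      obtain r q where rq: "z = (r, q)" "r < R" "q < I1 + I2 + I3 - 2" using z by auto
      consider "q = 0" | "0 < q" "q < I1" | "I1 \<le> q" "q < I1 + I2 - 1" | "I1 + I2 - 1 \<le> q" by linarith
      then show "z \<in> eidx I1 I2 ` TcI I1 I2 I3 R"
      proof cases
        case 1 then show ?thesis using rq
          by (intro rev_image_eqI[of "Lam r"]) (auto simp: TcI_def eidx_def)
      next
        case 2 then show ?thesis using rq assms
          by (intro rev_image_eqI[of "FA (q - 1) r"]) (auto simp: TcI_def eidx_def)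
      next
        case 3 then show ?thesis using rq assms
          by (intro rev_image_eqI[of "FB (q - I1) r"]) (auto simp: TcI_def eidx_def)
      next
        case 4 then show ?thesis using rq assms
          by (intro rev_image_eqI[of "FC (q - (I1 + I2 - 1)) r"]) (auto simp: TcI_def eidx_def)
      qed
    qed
  qed
qed


lemma merge_vals:
  assumes I: "I1 \<ge> 2" "I2 \<ge> 2" "I3 \<ge> 2" and r: "r < R"
    and p: "p = merge (ScI I1 I2 I3 R) (TcI I1 I2 I3 R) (y, \<lambda>\<tau>\<in>TcI I1 I2 I3 R. ccs I1 I2 I3 y \<tau> * \<theta> (eidx I1 I2 \<tau>))"
  shows "p (Lam r) = inverse (y (FA (I1 - 1) r) * y (FB (I2 - 1) r) * y (FC (I3 - 1) r)) * \<theta> (r, 0)"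
    and "i < I1 \<Longrightarrow> p (FA i r) = y (FA (I1 - 1) r) * ext1 I1 (\<lambda>q. \<theta> (r, 1 + q)) i"
    and "j < I2 \<Longrightarrow> p (FB j r) = y (FB (I2 - 1) r) * ext1 I2 (\<lambda>q. \<theta> (r, I1 + q)) j"
    and "k < I3 \<Longrightarrow> p (FC k r) = y (FC (I3 - 1) r) * ext1 I3 (\<lambda>q. \<theta> (r, I1 + I2 - 1 + q)) k"
  using I r unfolding p
  by (auto simp: merge_def ScI_def TcI_def ccs_def eidx_def ext1_def)

lemma merge_prod:
  assumes I: "I1 \<ge> 2" "I2 \<ge> 2" "I3 \<ge> 2" and r: "r < R"
    and p: "p = merge (ScI I1 I2 I3 R) (TcI I1 I2 I3 R) (y, \<lambda>\<tau>\<in>TcI I1 I2 I3 R. ccs I1 I2 I3 y \<tau> * \<theta> (eidx I1 I2 \<tau>))"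
    and y: "\<And>\<tau>. \<tau> \<in> ScI I1 I2 I3 R \<Longrightarrow> y \<tau> \<noteq> 0"
    and ijk: "i < I1" "j < I2" "k < I3"
  shows "p (Lam r) * p (FA i r) * p (FB j r) * p (FC k r) =
         cpd_base_map I1 I2 I3 (\<lambda>q. \<theta> (r, q)) (i + I1 * j + I1 * I2 * k)"
proof -
  have a: "y (FA (I1 - 1) r) \<noteq> 0" "y (FB (I2 - 1) r) \<noteq> 0" "y (FC (I3 - 1) r) \<noteq> 0"
    using y r by (auto simp: ScI_def)
  show ?thesis
    unfolding base_map_enc[OF ijk] merge_vals(1)[OF I r p] merge_vals(2)[OF I r p ijk(1)]
      merge_vals(3)[OF I r p ijk(2)] merge_vals(4)[OF I r p ijk(3)]
    using a by (simp add: field_simps)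
qed

lemma PhiP_prod:
  assumes r: "r < R" and ijk: "i < I1" "j < I2" "k < I3"
  shows "PhiP I1 I2 I3 R \<theta> (Lam r) * PhiP I1 I2 I3 R \<theta> (FA i r) * PhiP I1 I2 I3 R \<theta> (FB j r) * PhiP I1 I2 I3 R \<theta> (FC k r) =
         cpd_base_map I1 I2 I3 (\<lambda>q. \<theta> (r, q)) (i + I1 * j + I1 * I2 * k)"
  unfolding base_map_enc[OF ijk] using r ijk by (simp add: PhiP_def)

lemma key:
  assumes I: "I1 \<ge> 2" "I2 \<ge> 2" "I3 \<ge> 2"
    and p: "p = merge (ScI I1 I2 I3 R) (TcI I1 I2 I3 R) (y, \<lambda>\<tau>\<in>TcI I1 I2 I3 R. ccs I1 I2 I3 y \<tau> * \<theta> (eidx I1 I2 \<tau>))"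
    and y: "\<And>\<tau>. \<tau> \<in> ScI I1 I2 I3 R \<Longrightarrow> y \<tau> \<noteq> 0"
    and good: "\<forall>p' \<in> space (cpd_measure I1 I2 I3 R).
          (\<forall>i<I1. \<forall>j<I2. \<forall>k<I3. cpd_tensor R p' i j k = cpd_tensor R p i j k)
          \<longrightarrow> cpd_perm_scale I1 I2 I3 R p p'"
  shows "\<forall>\<theta>' \<in> space (PiM ({..<R} \<times> {..<I1 + I2 + I3 - 2}) (\<lambda>_. lborel)).
          (\<forall>s<I1 * I2 * I3. (\<Sum>r<R. cpd_base_map I1 I2 I3 (\<lambda>k. \<theta>' (r, k)) s) = (\<Sum>r<R. cpd_base_map I1 I2 I3 (\<lambda>k. \<theta> (r, k)) s))
          \<longrightarrow> (\<exists>\<sigma>. \<sigma> permutes {..<R} \<and>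
                (\<forall>r<R. \<forall>s<I1 * I2 * I3. cpd_base_map I1 I2 I3 (\<lambda>k. \<theta>' (\<sigma> r, k)) s = cpd_base_map I1 I2 I3 (\<lambda>k. \<theta> (r, k)) s))"
proof (intro ballI impI)
  fix \<theta>' :: "nat \<times> nat \<Rightarrow> real"
  assume sums: "\<forall>s<I1 * I2 * I3. (\<Sum>r<R. cpd_base_map I1 I2 I3 (\<lambda>k. \<theta>' (r, k)) s) = (\<Sum>r<R. cpd_base_map I1 I2 I3 (\<lambda>k. \<theta> (r, k)) s)"
  define p' where "p' = PhiP I1 I2 I3 R \<theta>'"
  have sp: "p' \<in> space (cpd_measure I1 I2 I3 R)"
    by (simp add: p'_def PhiP_def cpd_measure_def space_PiM)
  have teq: "cpd_tensor R p' i j k = cpd_tensor R p i j k" if ijk: "i < I1" "j < I2" "k < I3" for i j k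
  proof -
    have "cpd_tensor R p' i j k = (\<Sum>r<R. cpd_base_map I1 I2 I3 (\<lambda>q. \<theta>' (r, q)) (i + I1 * j + I1 * I2 * k))"
      unfolding cpd_tensor_def p'_def by (intro sum.cong refl PhiP_prod ijk) auto
    also have "\<dots> = (\<Sum>r<R. cpd_base_map I1 I2 I3 (\<lambda>q. \<theta> (r, q)) (i + I1 * j + I1 * I2 * k))"
      using sums enc_bounds[OF ijk] by blast
    also have "\<dots> = cpd_tensor R p i j k"
      unfolding cpd_tensor_def by (intro sum.cong refl merge_prod[OF I _ p y ijk, symmetric]) auto
    finally show ?thesis .
  qed
  have "cpd_perm_scale I1 I2 I3 R p p'" using good sp teq by blast
  then obtain \<sigma> where \<sigma>: "\<sigma> permutes {..<R}"
    and sc: "\<forall>r<R. \<exists>\<delta> \<alpha> \<beta> \<gamma> :: real. \<delta> * \<alpha> * \<beta> * \<gamma> = 1 \<and>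
            p' (Lam (\<sigma> r)) = \<delta> * p (Lam r) \<and>
            (\<forall>i<I1. p' (FA i (\<sigma> r)) = \<alpha> * p (FA i r)) \<and>
            (\<forall>j<I2. p' (FB j (\<sigma> r)) = \<beta> * p (FB j r)) \<and>
            (\<forall>k<I3. p' (FC k (\<sigma> r)) = \<gamma> * p (FC k r))"
    unfolding cpd_perm_scale_def by blast
  show "\<exists>\<sigma>. \<sigma> permutes {..<R} \<and>
                (\<forall>r<R. \<forall>s<I1 * I2 * I3. cpd_base_map I1 I2 I3 (\<lambda>k. \<theta>' (\<sigma> r, k)) s = cpd_base_map I1 I2 I3 (\<lambda>k. \<theta> (r, k)) s)"
  proof (intro exI conjI allI impI)
    show "\<sigma> permutes {..<R}" by fact
    fix r s assume r: "r < R" and s: "s < I1 * I2 * I3"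
    have I0: "0 < I1" "0 < I2" using I by auto
    define i where "i = s mod I1"
    define j where "j = (s div I1) mod I2"
    define k where "k = s div (I1 * I2)"
    have se: "s = i + I1 * j + I1 * I2 * k" and ijk: "i < I1" "j < I2" "k < I3"
      using dec_enc[OF I0 s] unfolding i_def j_def k_def by auto
    have sr: "\<sigma> r < R" using permutes_in_image[OF \<sigma>, of r] r by simp
    obtain \<delta> \<alpha> \<beta> \<gamma> :: real where h: "\<delta> * \<alpha> * \<beta> * \<gamma> = 1"
            "p' (Lam (\<sigma> r)) = \<delta> * p (Lam r)"
            "p' (FA i (\<sigma> r)) = \<alpha> * p (FA i r)"
            "p' (FB j (\<sigma> r)) = \<beta> * p (FB j r)"
            "p' (FC k (\<sigma> r)) = \<gamma> * p (FC k r)"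
      using sc r ijk by blast
    have "cpd_base_map I1 I2 I3 (\<lambda>q. \<theta>' (\<sigma> r, q)) s =
          p' (Lam (\<sigma> r)) * p' (FA i (\<sigma> r)) * p' (FB j (\<sigma> r)) * p' (FC k (\<sigma> r))"
      unfolding se p'_def by (rule PhiP_prod[OF sr ijk, symmetric])
    also have "\<dots> = (\<delta> * \<alpha> * \<beta> * \<gamma>) * (p (Lam r) * p (FA i r) * p (FB j r) * p (FC k r))"
      unfolding h(2-5) by (simp add: algebra_simps)
    also have "\<dots> = cpd_base_map I1 I2 I3 (\<lambda>q. \<theta> (r, q)) s"
      unfolding h(1) se by (simp add: merge_prod[OF I r p y ijk])
    finally show "cpd_base_map I1 I2 I3 (\<lambda>k. \<theta>' (\<sigma> r, k)) s = cpd_base_map I1 I2 I3 (\<lambda>k. \<theta> (r, k)) s" .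
  qed
qed

lemma scale_reindex_AE:
  fixes e :: "'i \<Rightarrow> 'j" and c :: "'i \<Rightarrow> real"
  assumes fin: "finite I" and bij: "bij_betw e I J" and c: "\<And>i. i \<in> I \<Longrightarrow> c i \<noteq> 0"
    and ae: "AE x in PiM I (\<lambda>_. lborel). P x"
  shows "AE \<theta> in PiM J (\<lambda>_. lborel). P (\<lambda>i\<in>I. c i * \<theta> (e i))"
proof -
  interpret product_sigma_finite "\<lambda>_. lborel :: real measure" by standard
  have finJ: "finite J" using bij fin bij_betw_finite by blast
  have eJ: "\<And>i. i \<in> I \<Longrightarrow> e i \<in> J" using bij by (auto simp: bij_betw_def)
  define F where "F = (\<lambda>\<theta>::'j\<Rightarrow>real. \<lambda>i\<in>I. c i * \<theta> (e i))"
  define K where "K = (\<Prod>i\<in>I. ennreal \<bar>c i\<bar>)"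
  define M' where "M' = density (PiM J (\<lambda>_. lborel :: real measure)) (\<lambda>_. K)"
  have Fm: "F \<in> measurable (PiM J (\<lambda>_. lborel)) (PiM I (\<lambda>_. lborel))"
    unfolding F_def
    by (intro measurable_restrict borel_measurable_times measurable_const measurable_PiM_component_rev eJ) auto
  have Fm': "F \<in> measurable M' (PiM I (\<lambda>_. lborel))"
    using Fm unfolding M'_def by simp
  let ?e' = "the_inv_into I e"
  have e'I: "\<And>j. j \<in> J \<Longrightarrow> ?e' j \<in> I" and ee': "\<And>j. j \<in> J \<Longrightarrow> e (?e' j) = j"
    and e'e: "\<And>i. i \<in> I \<Longrightarrow> ?e' (e i) = i"
    using bij by (auto simp: bij_betw_def the_inv_into_into f_the_inv_into_f the_inv_into_f_f)
  have D: "distr M' (PiM I (\<lambda>_. lborel)) F = PiM I (\<lambda>_. lborel)"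
  proof (rule PiM_eqI[OF fin])
    show "sets (distr M' (PiM I (\<lambda>_. lborel)) F) = sets (PiM I (\<lambda>_. lborel))" by simp
    fix A assume A: "\<And>i. i \<in> I \<Longrightarrow> A i \<in> sets (lborel :: real measure)"
    define B where "B = (\<lambda>j. {x::real. c (?e' j) * x \<in> A (?e' j)})"
    have Bm: "\<And>j. j \<in> J \<Longrightarrow> B j \<in> sets lborel"
    proof -
      fix j assume "j \<in> J"
      have "B j = ((*) (c (?e' j))) -` A (?e' j) \<inter> space lborel" by (auto simp: B_def)
      also have "\<dots> \<in> sets lborel"
        using A[OF e'I[OF \<open>j\<in>J\<close>]] by (intro measurable_sets[where A=lborel]) auto
      finally show "B j \<in> sets lborel" .
    qed
    have pre: "F -` Pi\<^sub>E I A \<inter> space M' = Pi\<^sub>E J B"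
    proof (intro set_eqI iffI)
      fix \<theta> assume h: "\<theta> \<in> F -` Pi\<^sub>E I A \<inter> space M'"
      then have ext: "\<theta> \<in> extensional J" by (auto simp: M'_def space_PiM PiE_def)
      have "\<forall>i\<in>I. c i * \<theta> (e i) \<in> A i" using h by (auto simp: F_def PiE_iff)
      then show "\<theta> \<in> Pi\<^sub>E J B" using ext e'I ee' by (auto simp: PiE_iff B_def) metis
    next
      fix \<theta> assume h: "\<theta> \<in> Pi\<^sub>E J B"
      then have "\<forall>j\<in>J. c (?e' j) * \<theta> j \<in> A (?e' j)" by (auto simp: PiE_iff B_def)
      then have "\<forall>i\<in>I. c i * \<theta> (e i) \<in> A i" using eJ e'e by force
      then show "\<theta> \<in> F -` Pi\<^sub>E I A \<inter> space M'"
        using h by (auto simp: F_def PiE_iff M'_def space_PiM)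
    qed
    have lb: "\<And>i. i \<in> I \<Longrightarrow> emeasure lborel (B (e i)) = ennreal (inverse \<bar>c i\<bar>) * emeasure lborel (A i)"
    proof -
      fix i assume i: "i \<in> I"
      have "B (e i) = ((*) (c i)) -` A i \<inter> space lborel" by (auto simp: B_def e'e[OF i])
      then have "emeasure lborel (B (e i)) = emeasure (distr lborel borel ((*) (c i))) (A i)"
        using A[OF i] by (subst emeasure_distr) auto
      also have "\<dots> = emeasure (density lborel (\<lambda>_. ennreal (inverse \<bar>c i\<bar>))) (A i)"
        using lborel_distr_mult[OF c[OF i]] by simp
      also have "\<dots> = ennreal (inverse \<bar>c i\<bar>) * emeasure lborel (A i)"
        using A[OF i] by (intro emeasure_density_const) auto
      finally show "?thesis i" .
    qed
    have "emeasure (distr M' (PiM I (\<lambda>_. lborel)) F) (Pi\<^sub>E I A) = emeasure M' (Pi\<^sub>E J B)"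
      using A by (subst emeasure_distr[OF Fm']) (auto intro!: sets_PiM_I_finite fin simp: pre)
    also have "\<dots> = K * emeasure (PiM J (\<lambda>_. lborel)) (Pi\<^sub>E J B)"
      unfolding M'_def using Bm by (intro emeasure_density_const sets_PiM_I_finite finJ) auto
    also have "\<dots> = K * (\<Prod>j\<in>J. emeasure lborel (B j))"
      using Bm by (subst emeasure_PiM[OF finJ]) auto
    also have "(\<Prod>j\<in>J. emeasure lborel (B j)) = (\<Prod>i\<in>I. emeasure lborel (B (e i)))"
      using prod.reindex_bij_betw[OF bij, of "\<lambda>j. emeasure lborel (B j)"] by simp
    also have "\<dots> = (\<Prod>i\<in>I. ennreal (inverse \<bar>c i\<bar>) * emeasure lborel (A i))"
      using lb by (intro prod.cong) auto
    also have "K * \<dots> = (\<Prod>i\<in>I. (ennreal \<bar>c i\<bar> * ennreal (inverse \<bar>c i\<bar>)) * emeasure lborel (A i))"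
      unfolding K_def prod.distrib[symmetric] by (simp add: mult.assoc)
    also have "\<dots> = (\<Prod>i\<in>I. emeasure lborel (A i))"
    proof (intro prod.cong refl)
      fix i assume i: "i \<in> I"
      have "ennreal \<bar>c i\<bar> * ennreal (inverse \<bar>c i\<bar>) = ennreal (\<bar>c i\<bar> * inverse \<bar>c i\<bar>)"
        by (simp add: ennreal_mult)
      also have "\<dots> = 1" using c[OF i] by simp
      finally show "ennreal \<bar>c i\<bar> * ennreal (inverse \<bar>c i\<bar>) * emeasure lborel (A i) = emeasure lborel (A i)" by simp
    qed
    finally show "emeasure (distr M' (PiM I (\<lambda>_. lborel)) F) (Pi\<^sub>E I A) = (\<Prod>i\<in>I. emeasure lborel (A i))" .
  qed
  have "AE x in distr M' (PiM I (\<lambda>_. lborel)) F. P x" unfolding D by (rule ae)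
  then have "AE \<theta> in M'. P (F \<theta>)" by (rule AE_distrD[OF Fm'])
  then have "AE \<theta> in PiM J (\<lambda>_. lborel). 0 < K \<longrightarrow> P (F \<theta>)"
    unfolding M'_def by (subst (asm) AE_density) auto
  moreover have "0 < K" unfolding K_def using c
    by (subst prod_ennreal) (auto intro!: prod_pos)
  ultimately show ?thesis by (simp add: F_def)
qed

lemma merge_AE:
  assumes fS: "finite S" and fT: "finite T" and disj: "S \<inter> T = {}"
    and ae: "AE p in PiM (S \<union> T) (\<lambda>_. lborel::real measure). P p"
  shows "AE y in PiM S (\<lambda>_. lborel::real measure). AE x in PiM T (\<lambda>_. lborel::real measure). P (merge S T (y, x))"
proof -
  interpret product_sigma_finite "\<lambda>_. lborel :: real measure" by standard
  interpret S: finite_product_sigma_finite "\<lambda>_. lborel :: real measure" S by standard fact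
  interpret T: finite_product_sigma_finite "\<lambda>_. lborel :: real measure" T by standard fact
  interpret P: pair_sigma_finite "PiM S (\<lambda>_. lborel :: real measure)" "PiM T (\<lambda>_. lborel :: real measure)" by standard
  have "AE z in distr (PiM S (\<lambda>_. lborel) \<Otimes>\<^sub>M PiM T (\<lambda>_. lborel)) (PiM (S \<union> T) (\<lambda>_. lborel)) (merge S T). P z"
    unfolding distr_merge[OF disj fS fT] by (rule ae)
  then have "AE z in PiM S (\<lambda>_. lborel) \<Otimes>\<^sub>M PiM T (\<lambda>_. lborel). P (merge S T z)"
    by (rule AE_distrD[OF measurable_merge])
  from P.AE_pair[OF this] show ?thesis by simp
qed

lemma exists_nonzero:
  assumes fS: "finite S" and ae: "AE y in PiM S (\<lambda>_. lborel::real measure). Q y"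
  shows "\<exists>y. (\<forall>\<tau>\<in>S. y \<tau> \<noteq> 0) \<and> Q y"
proof -
  interpret product_sigma_finite "\<lambda>_. lborel :: real measure" by standard
  have nz: "AE y in PiM S (\<lambda>_. lborel::real measure). y \<tau> \<noteq> 0" if t: "\<tau> \<in> S" for \<tau>
  proof (rule AE_I')
    let ?N = "Pi\<^sub>E S (\<lambda>\<sigma>. if \<sigma> = \<tau> then {0::real} else UNIV)"
    have "emeasure (PiM S (\<lambda>_. lborel::real measure)) ?N = (\<Prod>\<sigma>\<in>S. emeasure lborel (if \<sigma> = \<tau> then {0::real} else UNIV))"
      by (rule emeasure_PiM[OF fS]) auto
    also have "\<dots> = 0" using t fS by (intro prod_zero) auto
    finally show "?N \<in> null_sets (PiM S (\<lambda>_. lborel::real measure))"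
      using fS by (auto intro!: sets_PiM_I_finite)
    show "{y \<in> space (PiM S (\<lambda>_. lborel)). \<not> y \<tau> \<noteq> 0} \<subseteq> ?N"
      by (auto simp: space_PiM PiE_iff extensional_def)
  qed
  have "AE y in PiM S (\<lambda>_. lborel::real measure). \<forall>\<tau>\<in>S. y \<tau> \<noteq> 0"
    using nz fS by (simp add: AE_finite_all)
  with ae have "AE y in PiM S (\<lambda>_. lborel::real measure). (\<forall>\<tau>\<in>S. y \<tau> \<noteq> 0) \<and> Q y"
    by eventually_elim auto
  moreover have "emeasure (PiM S (\<lambda>_. lborel::real measure)) (space (PiM S (\<lambda>_. lborel::real measure))) \<noteq> 0"
  proof -
    have "space (PiM S (\<lambda>_. lborel::real measure)) = Pi\<^sub>E S (\<lambda>_. UNIV)" by (simp add: space_PiM)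
    then have "emeasure (PiM S (\<lambda>_. lborel::real measure)) (space (PiM S (\<lambda>_. lborel::real measure))) = (\<Prod>\<sigma>\<in>S. emeasure lborel (UNIV::real set))"
      using emeasure_PiM[OF fS, of "\<lambda>_. UNIV"] by simp
    then show ?thesis by simp
  qed
  moreover
  { assume H: "\<not> (\<exists>y. (\<forall>\<tau>\<in>S. y \<tau> \<noteq> 0) \<and> Q y)"
    assume "AE y in PiM S (\<lambda>_. lborel::real measure). (\<forall>\<tau>\<in>S. y \<tau> \<noteq> 0) \<and> Q y"
    then obtain N where N: "{y \<in> space (PiM S (\<lambda>_. lborel::real measure)). \<not> ((\<forall>\<tau>\<in>S. y \<tau> \<noteq> 0) \<and> Q y)} \<subseteq> N"
      "emeasure (PiM S (\<lambda>_. lborel::real measure)) N = 0" "N \<in> sets (PiM S (\<lambda>_. lborel::real measure))"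
      by (rule AE_E)
    have "space (PiM S (\<lambda>_. lborel::real measure)) \<subseteq> N" using N(1) H by blast
    then have "emeasure (PiM S (\<lambda>_. lborel::real measure)) (space (PiM S (\<lambda>_. lborel::real measure))) \<le> emeasure (PiM S (\<lambda>_. lborel::real measure)) N"
      using N(3) by (intro emeasure_mono) auto
    with N(2) have "emeasure (PiM S (\<lambda>_. lborel::real measure)) (space (PiM S (\<lambda>_. lborel::real measure))) = 0" by simp }
  ultimately show ?thesis by blast
qed

lemma ccs_nonzero:
  assumes y: "\<And>\<tau>. \<tau> \<in> ScI I1 I2 I3 R \<Longrightarrow> y \<tau> \<noteq> 0" and t: "\<tau> \<in> TcI I1 I2 I3 R"
  shows "ccs I1 I2 I3 y \<tau> \<noteq> 0"
proof -
  have "\<And>r. r < R \<Longrightarrow> y (FA (I1 - 1) r) \<noteq> 0 \<and> y (FB (I2 - 1) r) \<noteq> 0 \<and> y (FC (I3 - 1) r) \<noteq> 0"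
    using y by (auto simp: ScI_def)
  then show ?thesis using t by (cases \<tau>) (auto simp: TcI_def ccs_def)
qed

theorem mainTheorem8:
  fixes I1 I2 I3 R :: nat
  assumes "I1 \<ge> 2" and "I2 \<ge> 2" and "I3 \<ge> 2" and "R \<ge> 1"
    and "cpd_generically_unique I1 I2 I3 R"
  shows "additive_identifiable (I1 + I2 + I3 - 2) (I1 * I2 * I3) R (cpd_base_map I1 I2 I3)"
proof -
  have I: "I1 \<ge> 2" "I2 \<ge> 2" "I3 \<ge> 2" by fact+
  have I': "I1 \<ge> 1" "I2 \<ge> 1" "I3 \<ge> 1" using I by auto
  define S where "S = ScI I1 I2 I3 R"
  define T where "T = TcI I1 I2 I3 R"
  have finS: "finite S" unfolding S_def by (rule finite_ScI[OF I'])
  have finT: "finite T" unfolding T_def by (rule finite_TcI[OF I'])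
  have disj: "S \<inter> T = {}" unfolding S_def T_def by (rule ScI_TcI_disj)
  have meq: "cpd_measure I1 I2 I3 R = PiM (S \<union> T) (\<lambda>_. lborel)"
    unfolding cpd_measure_def S_def T_def ScI_TcI_union[OF I'] ..
  define G where "G = (\<lambda>p. \<forall>p' \<in> space (cpd_measure I1 I2 I3 R).
          (\<forall>i<I1. \<forall>j<I2. \<forall>k<I3. cpd_tensor R p' i j k = cpd_tensor R p i j k)
          \<longrightarrow> cpd_perm_scale I1 I2 I3 R p p')"
  have "AE p in cpd_measure I1 I2 I3 R. G p"
    using assms(5) unfolding cpd_generically_unique_def G_def .
  then have "AE p in PiM (S \<union> T) (\<lambda>_. lborel). G p" by (simp only: meq)
  from merge_AE[OF finS finT disj this]
  have "AE y in PiM S (\<lambda>_. lborel::real measure). AE x in PiM T (\<lambda>_. lborel::real measure). G (merge S T (y, x))" .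
  from exists_nonzero[OF finS this] obtain y where
    y: "\<And>\<tau>. \<tau> \<in> S \<Longrightarrow> y \<tau> \<noteq> 0" and aey: "AE x in PiM T (\<lambda>_. lborel::real measure). G (merge S T (y, x))"
    by blast
  have "AE \<theta> in PiM ({..<R} \<times> {..<I1 + I2 + I3 - 2}) (\<lambda>_. lborel).
          G (merge S T (y, \<lambda>\<tau>\<in>T. ccs I1 I2 I3 y \<tau> * \<theta> (eidx I1 I2 \<tau>)))"
    using scale_reindex_AE[OF finT _ _ aey, of "eidx I1 I2" "{..<R} \<times> {..<I1 + I2 + I3 - 2}" "ccs I1 I2 I3 y"]
      bij_eidx[OF I, of R] ccs_nonzero[of I1 I2 I3 R y] y
    unfolding S_def T_def by blast
  then show ?thesis
    unfolding additive_identifiable_def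
  proof (rule eventually_mono)
    fix \<theta> :: "nat \<times> nat \<Rightarrow> real"
    assume g: "G (merge S T (y, \<lambda>\<tau>\<in>T. ccs I1 I2 I3 y \<tau> * \<theta> (eidx I1 I2 \<tau>)))"
    show "\<forall>\<theta>' \<in> space (PiM ({..<R} \<times> {..<I1 + I2 + I3 - 2}) (\<lambda>_. lborel)).
          (\<forall>s<I1 * I2 * I3. (\<Sum>r<R. cpd_base_map I1 I2 I3 (\<lambda>k. \<theta>' (r, k)) s) = (\<Sum>r<R. cpd_base_map I1 I2 I3 (\<lambda>k. \<theta> (r, k)) s))
          \<longrightarrow> (\<exists>\<sigma>. \<sigma> permutes {..<R} \<and>
                (\<forall>r<R. \<forall>s<I1 * I2 * I3. cpd_base_map I1 I2 I3 (\<lambda>k. \<theta>' (\<sigma> r, k)) s = cpd_base_map I1 I2 I3 (\<lambda>k. \<theta> (r, k)) s))"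
      by (rule key[OF I refl]) (use y g in \<open>auto simp: S_def T_def G_def\<close>)
  qed
qed

end
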